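(* Let $W,V$ be subspaces of $\mathbb{R}^n$ with $\mathbb{R}^n=W\oplus V^\perp$. Let $\mu\in\mathcal{P}_2(W)$ and $\nu\in\mathcal{P}_2(V)$ be Bessel probability measures with bounds $B_\mu>0$ and $B_\nu>0$ respectively, and let $\gamma\in\Gamma(\mu,\nu)$. Then the following are equivalent: (1) for all $\mathbf{f}\in W$, $\mathbf{f}=\int_{W\times V}\mathbf{x}\langle\mathbf{y},\mathbf{f}\rangle\,d\gamma(\mathbf{x},\mathbf{y})$; (2) for all $\mathbf{f}\in\mathbb{R}^n$, $\boldsymbol{\pi}_{WV^\perp}\mathbf{f}=\int_{W\times V}\mathbf{x}\langle\mathbf{y},\mathbf{f}\rangle\,d\gamma(\mathbf{x},\mathbf{y})$; (3) for all $\mathbf{f}\in\mathbb{R}^n$, $\boldsymbol{\pi}_{VW^\perp}\mathbf{f}=\int_{W\times V}\langle\mathbf{x},\mathbf{f}\rangle\mathbf{y}\,d\gamma(\mathbf{x},\mathbf{y})$; (4) for all $\mathbf{f},\mathbf{g}\in\mathbb{R}^n$, $\langle\boldsymbol{\pi}_{WV^\perp}\mathbf{f},\mathbf{g}\rangle=\int_{W\times V}\langle\mathbf{x},\mathbf{g}\rangle\langle\mathbf{y},\mathbf{f}\rangle\,d\gamma(\mathbf{x},\mathbf{y})$; (5) for all $\mathbf{f},\mathbf{g}\in\mathbb{R}^n$, $\langle\boldsymbol{\pi}_{VW^\perp}\mathbf{f},\mathbf{g}\rangle=\int_{W\times V}\langle\mathbf{x},\mathbf{f}\rangle\langle\mathbf{y},\mathbf{g}\rangle\,d\gamma(\mathbf{x},\mathbf{y})$.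 If any of these conditions holds, then $\mu$ and $\nu$ are probabilistic frames for $W$ and $V$ with lower bounds $\frac1{B_\nu}$ and $\frac1{B_\mu}$, respectively. Furthermore, in that case $\mu$ and $(\mathbf{P}_W)_\#\nu$ are dual probabilistic frames for $W$, and $(\mathbf{P}_V)_\#\mu$ and $\nu$ are dual probabilistic frames for $V$.
   Context: $\mathcal{P}_2(W)$ is the set of Borel probability measures on $W$ (viewed as measures on $\mathbb{R}^n$ concentrated on $W$) with finite second moment $M_2(\mu)=\int\|\mathbf{x}\|^2d\mu(\mathbf{x})$. $\Gamma(\mu,\nu)$ is the set of couplings: Borel probability measures on $W\times V$ with first marginal $\mu$ and second marginal $\nu$. $\mu\in\mathcal{P}_2(W)$ is a Bessel probability measure for $W$ with bound $B$ if $\int_W|\langle\mathbf{x},\mathbf{y}\rangle|^2d\mu(\mathbf{y})\le B\|\mathbf{x}\|^2$ for all $\mathbf{x}\in W$; it is a probabilistic frame for $W$ with bounds $0<A\le B$ if moreover $A\|\mathbf{x}\|^2\le\int_W|\langle\mathbf{x},\mathbf{y}\rangle|^2d\mu(\mathbf{y})$ for all $\mathbf{x}\in W$. $\mathbf{P}_W$ is the orthogonal projection onto $W$; $\boldsymbol{\pi}_{WV^\perp}$ is the oblique projection onto $W$ along $V^\perp$, and $\boldsymbol{\pi}_{VW^\perp}$ the oblique projection onto $V$ along $W^\perp$ (note $\mathbb{R}^n=V\oplus W^\perp$ too). For a pushforward, $f_\#\mu(E)=\mu(f^{-1}(E))$. Two probability measures $\mu,\eta$ on $W$ are dual probabilistic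 frames for $W$ if $\mu$ is a probabilistic frame for $W$ and there is a coupling $\gamma\in\Gamma(\mu,\eta)$ with $\int\mathbf{x}\mathbf{y}^td\gamma(\mathbf{x},\mathbf{y})=\mathbf{P}_W$. *)

theory Defs
  imports "HOL-Probability.Probability"
begin

text \<open>Ambient space R^n is modelled as real^'n. Measures are Borel measures on the
whole space, concentrated on the relevant subspace.\<close>

text \<open>Oblique projection onto W along U (meaningful when R^n = W (+) U).\<close>
definition oblique_proj :: "(real^'n) set \<Rightarrow> (real^'n) set \<Rightarrow> real^'n \<Rightarrow> real^'n" where
  "oblique_proj W U f = (THE w. w \<in> W \<and> f - w \<in> U)"

definition orth_proj :: "(real^'n) set \<Rightarrow> real^'n \<Rightarrow> real^'n" where
  "orth_proj W = oblique_proj W (orthogonal_comp W)"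

definition direct_sum_univ :: "(real^'n) set \<Rightarrow> (real^'n) set \<Rightarrow> bool" where
  "direct_sum_univ W U \<longleftrightarrow> subspace W \<and> subspace U \<and> W \<inter> U = {0} \<and>
     (\<forall>f. \<exists>w\<in>W. \<exists>u\<in>U. f = w + u)"

definition prob_on :: "(real^'n) set \<Rightarrow> (real^'n) measure \<Rightarrow> bool" where
  "prob_on W \<mu> \<longleftrightarrow> prob_space \<mu> \<and> sets \<mu> = sets borel \<and> W \<in> sets \<mu> \<and> emeasure \<mu> W = 1"

definition P2 :: "(real^'n) set \<Rightarrow> (real^'n) measure \<Rightarrow> bool" where
  "P2 W \<mu> \<longleftrightarrow> prob_on W \<mu> \<and> integrable \<mu> (\<lambda>x. (norm x)\<^sup>2)"

definition bessel :: "(real^'n) set \<Rightarrow> (real^'n) measure \<Rightarrow> real \<Rightarrow> bool" where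
  "bessel W \<mu> B \<longleftrightarrow> P2 W \<mu> \<and>
     (\<forall>x\<in>W. (\<integral>y. \<bar>x \<bullet> y\<bar>\<^sup>2 \<partial>\<mu>) \<le> B * (norm x)\<^sup>2)"

definition prob_frame :: "(real^'n) set \<Rightarrow> (real^'n) measure \<Rightarrow> real \<Rightarrow> real \<Rightarrow> bool" where
  "prob_frame W \<mu> A B \<longleftrightarrow> 0 < A \<and> A \<le> B \<and> bessel W \<mu> B \<and>
     (\<forall>x\<in>W. A * (norm x)\<^sup>2 \<le> (\<integral>y. \<bar>x \<bullet> y\<bar>\<^sup>2 \<partial>\<mu>))"

text \<open>Couplings: probability measures on R^n x R^n with the given marginals
  (concentration on W x V follows from the marginals).\<close>
definition coupling :: "((real^'n) \<times> (real^'n)) measure \<Rightarrow> (real^'n) measure \<Rightarrow> (real^'n) measure \<Rightarrow> bool" where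
  "coupling \<gamma> \<mu> \<nu> \<longleftrightarrow> prob_space \<gamma> \<and> sets \<gamma> = sets (borel \<Otimes>\<^sub>M borel) \<and>
     distr \<gamma> borel fst = \<mu> \<and> distr \<gamma> borel snd = \<nu>"

definition outer :: "real^'n \<Rightarrow> real^'n \<Rightarrow> real^'n^'n" where
  "outer x y = (\<chi> i j. x $ i * y $ j)"

definition dual_prob_frames :: "(real^'n) set \<Rightarrow> (real^'n) measure \<Rightarrow> (real^'n) measure \<Rightarrow> bool" where
  "dual_prob_frames W \<mu> \<eta> \<longleftrightarrow> (\<exists>A B. prob_frame W \<mu> A B) \<and> prob_on W \<eta> \<and>
     (\<exists>\<gamma>. coupling \<gamma> \<mu> \<eta> \<and>
        (\<integral>p. outer (fst p) (snd p) \<partial>\<gamma>) = matrix (orth_proj W))"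

end

theory Submission
  imports Defs
begin


lemma obl_eq:
  assumes "subspace W" "subspace U" "W \<inter> U = {0}" "w \<in> W" "f - w \<in> U"
  shows "oblique_proj W U f = w"
  unfolding oblique_proj_def
proof (rule the_equality)
  show "w \<in> W \<and> f - w \<in> U" using assms by auto
  fix w' assume "w' \<in> W \<and> f - w' \<in> U"
  then have "w - w' \<in> W" "w - w' \<in> U"
    using assms subspace_diff[of W w w'] subspace_diff[of U "f - w'" "f - w"] by auto
  then have "w - w' = 0" using assms(3) by blast
  then show "w' = w" by simp
qed

lemma obl_props:
  assumes "direct_sum_univ W U"
  shows "oblique_proj W U f \<in> W" "f - oblique_proj W U f \<in> U"
proof -
  from assms obtain w u where "w \<in> W" "u \<in> U" "f = w + u" unfolding direct_sum_univ_def by blast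
  then have "oblique_proj W U f = w" using assms
    by (intro obl_eq) (auto simp: direct_sum_univ_def)
  then show "oblique_proj W U f \<in> W" "f - oblique_proj W U f \<in> U"
    using \<open>w \<in> W\<close> \<open>u \<in> U\<close> \<open>f = w + u\<close> by auto
qed

lemma obl_linear:
  assumes "direct_sum_univ W U"
  shows "linear (oblique_proj W U)"
proof -
  have s: "subspace W" "subspace U" "W \<inter> U = {0}" using assms by (auto simp: direct_sum_univ_def)
  note p = obl_props[OF assms]
  show ?thesis
  proof (rule linearI)
    fix x y
    show "oblique_proj W U (x + y) = oblique_proj W U x + oblique_proj W U y"
      apply (rule obl_eq[OF s])
       apply (simp add: p s subspace_add)
      using subspace_add[OF s(2) p(2)[of x] p(2)[of y]] by (simp add: algebra_simps)
  next
    fix c x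
    show "oblique_proj W U (c *\<^sub>R x) = c *\<^sub>R oblique_proj W U x"
      apply (rule obl_eq[OF s])
       apply (simp add: p s subspace_scale)
      using subspace_scale[OF s(2) p(2)[of x], of c] by (simp add: algebra_simps)
  qed
qed

lemma direct_sum_orth:
  fixes W :: "(real^'n) set"
  assumes "subspace W" shows "direct_sum_univ W (orthogonal_comp W)"
  unfolding direct_sum_univ_def
  using assms subspace_orthogonal_comp orthogonal_Int_0[OF assms]
    subspace_sum_orthogonal_comp[OF assms]
  by (auto simp: set_plus_def) (metis UNIV_I set_plus_elim subspace_sum_orthogonal_comp[OF assms])

lemma orthogonal_comp_iff: "x \<in> orthogonal_comp U \<longleftrightarrow> (\<forall>y\<in>U. y \<bullet> x = 0)"
  by (simp add: orthogonal_comp_def orthogonal_def)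

lemma orth_proj_props:
  fixes W :: "(real^'n) set"
  assumes "subspace W"
  shows "orth_proj W f \<in> W" "f - orth_proj W f \<in> orthogonal_comp W" "linear (orth_proj W)"
    "orth_proj W f \<bullet> g = f \<bullet> orth_proj W g" "norm (orth_proj W f) \<le> norm f"
    "y \<in> W \<Longrightarrow> y \<bullet> orth_proj W f = y \<bullet> f"
    "f \<in> W \<Longrightarrow> orth_proj W f = f"
proof -
  note d = direct_sum_orth[OF assms]
  show a: "orth_proj W f \<in> W" "f - orth_proj W f \<in> orthogonal_comp W" for f
    using obl_props[OF d] unfolding orth_proj_def by auto
  show "linear (orth_proj W)" unfolding orth_proj_def by (rule obl_linear[OF d])
  have i: "y \<bullet> orth_proj W f = y \<bullet> f" if "y \<in> W" for y f
  proof -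
    have "y \<bullet> (f - orth_proj W f) = 0" using a(2)[of f] that by (simp add: orthogonal_comp_iff)
    then show ?thesis by (simp add: inner_diff_right)
  qed
  then show "y \<in> W \<Longrightarrow> y \<bullet> orth_proj W f = y \<bullet> f" .
  have "orth_proj W f \<bullet> g = orth_proj W f \<bullet> orth_proj W g" using i[OF a(1)[of f], of g] by simp
  also have "\<dots> = f \<bullet> orth_proj W g" using i[OF a(1)[of g], of f] by (simp add: inner_commute)
  finally show "orth_proj W f \<bullet> g = f \<bullet> orth_proj W g" .
  have "(norm f)\<^sup>2 = (norm (orth_proj W f + (f - orth_proj W f)))\<^sup>2" by simp
  also have "\<dots> = (norm (orth_proj W f))\<^sup>2 + (norm (f - orth_proj W f))\<^sup>2"
    apply (rule norm_add_Pythagorean)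
    using a(1)[of f] a(2)[of f] by (auto simp: orthogonal_comp_iff orthogonal_def)
  finally have "(norm (orth_proj W f))\<^sup>2 \<le> (norm f)\<^sup>2" by simp
  then show "norm (orth_proj W f) \<le> norm f" using power2_le_imp_le by fastforce
  show "f \<in> W \<Longrightarrow> orth_proj W f = f" unfolding orth_proj_def
    using assms subspace_orthogonal_comp orthogonal_Int_0[OF assms]
    by (intro obl_eq) (auto simp: subspace_0)
qed

lemma ds_facts:
  fixes W V :: "(real^'n) set"
  assumes sW: "subspace W" and sV: "subspace V" and ds: "direct_sum_univ W (orthogonal_comp V)"
  shows "oblique_proj W (orthogonal_comp V) f \<in> W"
    "y \<in> V \<Longrightarrow> y \<bullet> oblique_proj W (orthogonal_comp V) f = y \<bullet> f"
    "f \<in> W \<Longrightarrow> oblique_proj W (orthogonal_comp V) f = f"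
    "g \<bullet> oblique_proj V (orthogonal_comp W) f = oblique_proj W (orthogonal_comp V) g \<bullet> f"
    "f \<in> V \<Longrightarrow> oblique_proj V (orthogonal_comp W) f = f"
proof -
  let ?P = "oblique_proj W (orthogonal_comp V)"
  note pp = obl_props[OF ds]
  have lin: "linear ?P" by (rule obl_linear[OF ds])
  show "?P f \<in> W" by (rule pp(1))
  show i: "y \<bullet> ?P f = y \<bullet> f" if "y \<in> V" for y f
  proof -
    have "y \<bullet> (f - ?P f) = 0" using pp(2)[of f] that by (simp add: orthogonal_comp_iff)
    then show ?thesis by (simp add: inner_diff_right)
  qed
  have s: "subspace W" "subspace (orthogonal_comp V)" "W \<inter> orthogonal_comp V = {0}"
    using ds by (auto simp: direct_sum_univ_def)
  show fw: "f \<in> W \<Longrightarrow> ?P f = f" for f by (rule obl_eq[OF s]) (auto simp: subspace_0[OF s(2)])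
  have VW: "V \<inter> orthogonal_comp W = {0}"
  proof safe
    fix v assume v: "v \<in> V" "v \<in> orthogonal_comp W"
    have "v \<bullet> v = 0"
    proof -
      obtain w u where "w \<in> W" "u \<in> orthogonal_comp V" "v = w + u"
        using ds unfolding direct_sum_univ_def by blast
      moreover have "v \<bullet> w = 0" using v(2) \<open>w \<in> W\<close> by (metis orthogonal_comp_iff inner_commute)
      moreover have "v \<bullet> u = 0" using v(1) \<open>u \<in> orthogonal_comp V\<close> by (simp add: orthogonal_comp_iff)
      ultimately show ?thesis by (simp add: inner_add_right)
    qed
    then show "v = 0" by simp
  qed (auto simp: subspace_0 sV subspace_orthogonal_comp)
  have Qeq: "oblique_proj V (orthogonal_comp W) f = adjoint ?P f" for f
  proof (rule obl_eq[OF sV subspace_orthogonal_comp VW])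
    have "adjoint ?P f \<in> orthogonal_comp (orthogonal_comp V)"
      unfolding orthogonal_comp_iff
    proof
      fix u assume "u \<in> orthogonal_comp V"
      then have "?P u = 0"
        by (intro obl_eq[OF s]) (auto simp: subspace_0[OF sW])
      then show "u \<bullet> adjoint ?P f = 0" by (simp add: adjoint_works[OF lin])
    qed
    then show "adjoint ?P f \<in> V" using orthogonal_comp_self[OF sV] by simp
    show "f - adjoint ?P f \<in> orthogonal_comp W"
      unfolding orthogonal_comp_iff
    proof
      fix w assume "w \<in> W"
      then show "w \<bullet> (f - adjoint ?P f) = 0"
        by (simp add: adjoint_works[OF lin] inner_diff_right fw inner_commute)
    qed
  qed
  show "g \<bullet> oblique_proj V (orthogonal_comp W) f = ?P g \<bullet> f"
    by (simp add: Qeq adjoint_works[OF lin])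
  show "f \<in> V \<Longrightarrow> oblique_proj V (orthogonal_comp W) f = f"
    by (rule obl_eq[OF sV subspace_orthogonal_comp VW]) (auto simp: subspace_0[OF subspace_orthogonal_comp])
qed



lemma P2_AE:
  assumes "P2 U m" shows "AE y in m. y \<in> U"
proof -
  have ps: "prob_space m" using assms by (simp add: P2_def prob_on_def)
  interpret prob_space m by (rule ps)
  have "U \<in> events" "emeasure m U = 1" using assms by (auto simp: P2_def prob_on_def)
  then have "prob U = 1" by (simp add: emeasure_eq_measure)
  then show ?thesis by (rule AE_prob_1)
qed
lemma P2_meas: "P2 U m \<Longrightarrow> h \<in> borel_measurable borel \<Longrightarrow> h \<in> borel_measurable m"
  unfolding P2_def prob_on_def using measurable_cong_sets[of m borel borel borel] by blast

lemma P2_int_sq: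
  fixes m :: "(real^'n) measure"
  assumes "P2 U m" shows "integrable m (\<lambda>y. \<bar>x \<bullet> y\<bar>\<^sup>2)"
proof (rule Bochner_Integration.integrable_bound)
  show "integrable m (\<lambda>y. (norm x)\<^sup>2 * (norm y)\<^sup>2)"
    using assms by (simp add: P2_def)
  show "(\<lambda>y. \<bar>x \<bullet> y\<bar>\<^sup>2) \<in> borel_measurable m" by (rule P2_meas[OF assms]) measurable
  show "AE y in m. norm (\<bar>x \<bullet> y\<bar>\<^sup>2) \<le> norm ((norm x)\<^sup>2 * (norm y)\<^sup>2)"
  proof (rule AE_I2)
    fix y
    have "\<bar>x \<bullet> y\<bar> \<le> norm x * norm y" by (rule Cauchy_Schwarz_ineq2)
    then have "\<bar>x \<bullet> y\<bar>\<^sup>2 \<le> (norm x * norm y)\<^sup>2" by (intro power_mono) auto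
    then show "norm (\<bar>x \<bullet> y\<bar>\<^sup>2) \<le> norm ((norm x)\<^sup>2 * (norm y)\<^sup>2)"
      by (simp add: power_mult_distrib)
  qed
qed

lemma bessel_all:
  fixes m :: "(real^'n) measure"
  assumes "bessel U m B" "subspace U" "B \<ge> 0"
  shows "(\<integral>y. \<bar>x \<bullet> y\<bar>\<^sup>2 \<partial>m) \<le> B * (norm x)\<^sup>2"
proof -
  have P: "P2 U m" using assms by (simp add: bessel_def)
  have "(\<integral>y. \<bar>x \<bullet> y\<bar>\<^sup>2 \<partial>m) = (\<integral>y. \<bar>orth_proj U x \<bullet> y\<bar>\<^sup>2 \<partial>m)"
  proof (rule integral_cong_AE)
    show "(\<lambda>y. \<bar>x \<bullet> y\<bar>\<^sup>2) \<in> borel_measurable m" by (rule P2_meas[OF P]) measurable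
    show "(\<lambda>y. \<bar>orth_proj U x \<bullet> y\<bar>\<^sup>2) \<in> borel_measurable m" by (rule P2_meas[OF P]) measurable
    show "AE y in m. \<bar>x \<bullet> y\<bar>\<^sup>2 = \<bar>orth_proj U x \<bullet> y\<bar>\<^sup>2"
      using P2_AE[OF P] by eventually_elim (simp add: orth_proj_props(6)[OF assms(2)] inner_commute)
  qed
  also have "\<dots> \<le> B * (norm (orth_proj U x))\<^sup>2"
    using assms orth_proj_props(1)[OF assms(2)] by (simp add: bessel_def)
  also have "\<dots> \<le> B * (norm x)\<^sup>2"
    using assms orth_proj_props(5)[OF assms(2), of x]
    by (intro mult_left_mono power_mono) auto
  finally show ?thesis .
qed



lemma ab_le: "(a::real) * b \<le> a\<^sup>2 + b\<^sup>2" if "0 \<le> a" "0 \<le> b"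
proof -
  have "0 \<le> (a - b)\<^sup>2" by simp
  then show ?thesis using mult_nonneg_nonneg[OF that] by (simp add: power2_diff)
qed

locale L =
  fixes W V :: "(real^'n) set"
    and \<mu> \<nu> :: "(real^'n) measure"
    and \<gamma> :: "((real^'n) \<times> (real^'n)) measure"
    and B\<mu> B\<nu> :: real
  assumes sW: "subspace W" and sV: "subspace V"
    and ds: "direct_sum_univ W (orthogonal_comp V)"
    and Bmu: "B\<mu> > 0" and Bnu: "B\<nu> > 0"
    and bmu: "bessel W \<mu> B\<mu>" and bnu: "bessel V \<nu> B\<nu>"
    and cp: "coupling \<gamma> \<mu> \<nu>"
begin

abbreviation "T f \<equiv> (\<integral>p. (snd p \<bullet> f) *\<^sub>R fst p \<partial>\<gamma>)"
abbreviation "S f \<equiv> (\<integral>p. (fst p \<bullet> f) *\<^sub>R snd p \<partial>\<gamma>)"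

lemma sets_g: "sets \<gamma> = sets (borel \<Otimes>\<^sub>M borel)" using cp by (simp add: coupling_def)

lemma ps_g: "prob_space \<gamma>" using cp by (simp add: coupling_def)

lemma gmeas: "h \<in> measurable (borel \<Otimes>\<^sub>M borel) N \<Longrightarrow> h \<in> measurable \<gamma> N"
  using measurable_cong_sets[OF sets_g refl, of N] by blast

lemma fst_meas: "fst \<in> measurable \<gamma> borel" by (rule gmeas) measurable
lemma snd_meas: "snd \<in> measurable \<gamma> borel" by (rule gmeas) measurable

lemma mu_eq: "\<mu> = distr \<gamma> borel fst" using cp by (simp add: coupling_def)
lemma nu_eq: "\<nu> = distr \<gamma> borel snd" using cp by (simp add: coupling_def)

lemma P2mu: "P2 W \<mu>" using bmu by (simp add: bessel_def)
lemma P2nu: "P2 V \<nu>" using bnu by (simp add: bessel_def)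

lemma AE_fst: "AE p in \<gamma>. fst p \<in> W"
  using P2_AE[OF P2mu] unfolding mu_eq by (rule AE_distrD[OF fst_meas])
lemma AE_snd: "AE p in \<gamma>. snd p \<in> V"
  using P2_AE[OF P2nu] unfolding nu_eq by (rule AE_distrD[OF snd_meas])

lemma int_fst2: "integrable \<gamma> (\<lambda>p. (norm (fst p))\<^sup>2)"
proof -
  have "integrable \<mu> (\<lambda>x. (norm x)\<^sup>2)" using P2mu by (simp add: P2_def)
  then show ?thesis unfolding mu_eq
    by (subst (asm) integrable_distr_eq[OF fst_meas]) auto
qed

lemma int_snd2: "integrable \<gamma> (\<lambda>p. (norm (snd p))\<^sup>2)"
proof -
  have "integrable \<nu> (\<lambda>x. (norm x)\<^sup>2)" using P2nu by (simp add: P2_def)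
  then show ?thesis unfolding nu_eq
    by (subst (asm) integrable_distr_eq[OF snd_meas]) auto
qed

lemma int_bound:
  fixes h :: "_ \<Rightarrow> 'b::{banach, second_countable_topology}"
  assumes "h \<in> borel_measurable (borel \<Otimes>\<^sub>M borel)"
    and "\<And>p. norm (h p) \<le> c * ((norm (fst p))\<^sup>2 + (norm (snd p))\<^sup>2)"
  shows "integrable \<gamma> h"
proof (rule Bochner_Integration.integrable_bound)
  show "integrable \<gamma> (\<lambda>p. c * ((norm (fst p))\<^sup>2 + (norm (snd p))\<^sup>2))"
    using int_fst2 int_snd2 by auto
  show "h \<in> borel_measurable \<gamma>" using assms(1) by (rule gmeas)
  show "AE p in \<gamma>. norm (h p) \<le> norm (c * ((norm (fst p))\<^sup>2 + (norm (snd p))\<^sup>2))"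
    by (intro AE_I2) (simp only: real_norm_def, rule order_trans[OF assms(2) abs_ge_self])
qed

lemma intT: "integrable \<gamma> (\<lambda>p. (snd p \<bullet> f) *\<^sub>R fst p)"
proof (rule int_bound[where c = "norm f"])
  fix p :: "(real^'n) \<times> (real^'n)"
  have "norm ((snd p \<bullet> f) *\<^sub>R fst p) = \<bar>snd p \<bullet> f\<bar> * norm (fst p)" by simp
  also have "\<dots> \<le> (norm (snd p) * norm f) * norm (fst p)"
    by (intro mult_right_mono Cauchy_Schwarz_ineq2) auto
  also have "\<dots> = norm f * (norm (fst p) * norm (snd p))" by simp
  also have "\<dots> \<le> norm f * ((norm (fst p))\<^sup>2 + (norm (snd p))\<^sup>2)"
    by (intro mult_left_mono ab_le) auto
  finally show "norm ((snd p \<bullet> f) *\<^sub>R fst p) \<le> norm f * ((norm (fst p))\<^sup>2 + (norm (snd p))\<^sup>2)" .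
qed measurable

lemma intS: "integrable \<gamma> (\<lambda>p. (fst p \<bullet> f) *\<^sub>R snd p)"
proof (rule int_bound[where c = "norm f"])
  fix p :: "(real^'n) \<times> (real^'n)"
  have "norm ((fst p \<bullet> f) *\<^sub>R snd p) = \<bar>fst p \<bullet> f\<bar> * norm (snd p)" by simp
  also have "\<dots> \<le> (norm (fst p) * norm f) * norm (snd p)"
    by (intro mult_right_mono Cauchy_Schwarz_ineq2) auto
  also have "\<dots> = norm f * (norm (fst p) * norm (snd p))" by simp
  also have "\<dots> \<le> norm f * ((norm (fst p))\<^sup>2 + (norm (snd p))\<^sup>2)"
    by (intro mult_left_mono ab_le) auto
  finally show "norm ((fst p \<bullet> f) *\<^sub>R snd p) \<le> norm f * ((norm (fst p))\<^sup>2 + (norm (snd p))\<^sup>2)" .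
qed measurable

lemma T_inner: "T f \<bullet> g = (\<integral>p. (fst p \<bullet> g) * (snd p \<bullet> f) \<partial>\<gamma>)"
proof -
  have "T f \<bullet> g = (\<integral>p. ((snd p \<bullet> f) *\<^sub>R fst p) \<bullet> g \<partial>\<gamma>)"
    by (rule integral_inner_left[symmetric]) (rule intT)
  then show ?thesis by (simp add: mult.commute)
qed

lemma S_inner: "S f \<bullet> g = (\<integral>p. (fst p \<bullet> f) * (snd p \<bullet> g) \<partial>\<gamma>)"
proof -
  have "S f \<bullet> g = (\<integral>p. ((fst p \<bullet> f) *\<^sub>R snd p) \<bullet> g \<partial>\<gamma>)"
    by (rule integral_inner_left[symmetric]) (rule intS)
  then show ?thesis by simp
qed

lemma int_fstsq: "integrable \<gamma> (\<lambda>p. (fst p \<bullet> x)\<^sup>2)"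
proof (rule int_bound[where c = "(norm x)\<^sup>2"])
  fix p :: "(real^'n) \<times> (real^'n)"
  have "\<bar>fst p \<bullet> x\<bar> \<le> norm (fst p) * norm x" by (rule Cauchy_Schwarz_ineq2)
  then have "(fst p \<bullet> x)\<^sup>2 \<le> (norm (fst p) * norm x)\<^sup>2"
    by (metis abs_ge_zero power2_abs power_mono)
  moreover have "0 \<le> (norm x)\<^sup>2 * (norm (fst p))\<^sup>2" "0 \<le> (norm x)\<^sup>2 * (norm (snd p))\<^sup>2" by auto
  ultimately show "norm ((fst p \<bullet> x)\<^sup>2) \<le> (norm x)\<^sup>2 * ((norm (fst p))\<^sup>2 + (norm (snd p))\<^sup>2)"
    apply (simp add: power_mult_distrib algebra_simps)
    by (smt (verit, best) mult_nonneg_nonneg zero_le_power2)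
qed measurable

lemma int_sndsq: "integrable \<gamma> (\<lambda>p. (snd p \<bullet> x)\<^sup>2)"
proof (rule int_bound[where c = "(norm x)\<^sup>2"])
  fix p :: "(real^'n) \<times> (real^'n)"
  have "\<bar>snd p \<bullet> x\<bar> \<le> norm (snd p) * norm x" by (rule Cauchy_Schwarz_ineq2)
  then have "(snd p \<bullet> x)\<^sup>2 \<le> (norm (snd p) * norm x)\<^sup>2"
    by (metis abs_ge_zero power2_abs power_mono)
  moreover have "0 \<le> (norm x)\<^sup>2 * (norm (fst p))\<^sup>2" "0 \<le> (norm x)\<^sup>2 * (norm (snd p))\<^sup>2" by auto
  ultimately show "norm ((snd p \<bullet> x)\<^sup>2) \<le> (norm x)\<^sup>2 * ((norm (fst p))\<^sup>2 + (norm (snd p))\<^sup>2)"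
    apply (simp add: power_mult_distrib algebra_simps)
    by (smt (verit, best) mult_nonneg_nonneg zero_le_power2)
qed measurable

lemma int_prod: "integrable \<gamma> (\<lambda>p. (fst p \<bullet> x) * (snd p \<bullet> y))"
proof -
  have "integrable \<gamma> (\<lambda>p. ((fst p \<bullet> x) *\<^sub>R snd p) \<bullet> y)"
    using intS[of x] by (rule integrable_inner_left)
  then show ?thesis by simp
qed

end


lemma lowbd:
  fixes a b :: "'a \<Rightarrow> real"
  assumes ia: "integrable M (\<lambda>p. (a p)\<^sup>2)" and ib: "integrable M (\<lambda>p. (b p)\<^sup>2)"
    and iab: "integrable M (\<lambda>p. a p * b p)"
    and N: "N = (\<integral>p. a p * b p \<partial>M)" and bb: "(\<integral>p. (b p)\<^sup>2 \<partial>M) \<le> B * N" and B: "B > 0"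
  shows "1 / B * N \<le> (\<integral>p. (a p)\<^sup>2 \<partial>M)"
proof -
  have pt: "2 * (a p * b p) \<le> B * (a p)\<^sup>2 + (1/B) * (b p)\<^sup>2" for p
  proof -
    have "0 \<le> (B * a p - b p)\<^sup>2" by simp
    then have "2 * B * (a p * b p) \<le> B * (B * (a p)\<^sup>2) + (b p)\<^sup>2"
      by (simp add: power2_diff power_mult_distrib algebra_simps power2_eq_square)
    then have "B * (2 * (a p * b p)) \<le> B * (B * (a p)\<^sup>2 + (1/B) * (b p)\<^sup>2)"
      using B by (simp add: algebra_simps)
    then show ?thesis using B by simp
  qed
  have "(\<integral>p. 2 * (a p * b p) \<partial>M) \<le> (\<integral>p. B * (a p)\<^sup>2 + (1/B) * (b p)\<^sup>2 \<partial>M)"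
    by (rule integral_mono) (use ia ib iab pt in auto)
  then have "2 * N \<le> B * (\<integral>p. (a p)\<^sup>2 \<partial>M) + (1/B) * (\<integral>p. (b p)\<^sup>2 \<partial>M)"
    using ia ib iab N by simp
  also have "(1/B) * (\<integral>p. (b p)\<^sup>2 \<partial>M) \<le> (1/B) * (B * N)"
    using bb B by (intro mult_left_mono) auto
  finally have "N \<le> B * (\<integral>p. (a p)\<^sup>2 \<partial>M)" using B by simp
  then show ?thesis using B by (simp add: field_simps)
qed

context L begin

abbreviation "P \<equiv> oblique_proj W (orthogonal_comp V)"
abbreviation "Q \<equiv> oblique_proj V (orthogonal_comp W)"

lemma T_P: "T f = T (P f)"
proof (rule integral_cong_AE)
  show "(\<lambda>p. (snd p \<bullet> f) *\<^sub>R fst p) \<in> borel_measurable \<gamma>" by (rule gmeas) measurable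
  show "(\<lambda>p. (snd p \<bullet> P f) *\<^sub>R fst p) \<in> borel_measurable \<gamma>" by (rule gmeas) measurable
  show "AE p in \<gamma>. (snd p \<bullet> f) *\<^sub>R fst p = (snd p \<bullet> P f) *\<^sub>R fst p"
    using AE_snd by eventually_elim (simp add: ds_facts(2)[OF sW sV ds])
qed

lemma equivs:
  "let c1 = (\<forall>f\<in>W. f = (\<integral>p. (snd p \<bullet> f) *\<^sub>R fst p \<partial>\<gamma>));
         c2 = (\<forall>f. oblique_proj W (orthogonal_comp V) f = (\<integral>p. (snd p \<bullet> f) *\<^sub>R fst p \<partial>\<gamma>));
         c3 = (\<forall>f. oblique_proj V (orthogonal_comp W) f = (\<integral>p. (fst p \<bullet> f) *\<^sub>R snd p \<partial>\<gamma>));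
         c4 = (\<forall>f g. oblique_proj W (orthogonal_comp V) f \<bullet> g =
                  (\<integral>p. (fst p \<bullet> g) * (snd p \<bullet> f) \<partial>\<gamma>));
         c5 = (\<forall>f g. oblique_proj V (orthogonal_comp W) f \<bullet> g =
                  (\<integral>p. (fst p \<bullet> f) * (snd p \<bullet> g) \<partial>\<gamma>))
     in (c1 \<longleftrightarrow> c2) \<and> (c2 \<longleftrightarrow> c3) \<and> (c3 \<longleftrightarrow> c4) \<and> (c4 \<longleftrightarrow> c5)"
proof -
  note F = ds_facts[OF sW sV ds]
  have 12: "(\<forall>f\<in>W. f = T f) \<longleftrightarrow> (\<forall>f. P f = T f)"
  proof
    assume h: "\<forall>f\<in>W. f = T f"
    show "\<forall>f. P f = T f"
    proof
      fix f
      have "P f = T (P f)" using h F(1) by blast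
      then show "P f = T f" using T_P[of f] by (rule trans[OF _ sym])
    qed
  next
    assume "\<forall>f. P f = T f" then show "\<forall>f\<in>W. f = T f" using F(3) by metis
  qed
  have 24: "(\<forall>f. P f = T f) \<longleftrightarrow> (\<forall>f g. P f \<bullet> g = (\<integral>p. (fst p \<bullet> g) * (snd p \<bullet> f) \<partial>\<gamma>))"
    unfolding T_inner[symmetric] using vector_eq_rdot by blast
  have 35: "(\<forall>f. Q f = S f) \<longleftrightarrow> (\<forall>f g. Q f \<bullet> g = (\<integral>p. (fst p \<bullet> f) * (snd p \<bullet> g) \<partial>\<gamma>))"
    unfolding S_inner[symmetric] using vector_eq_rdot by blast
  have 45: "(\<forall>f g. P f \<bullet> g = (\<integral>p. (fst p \<bullet> g) * (snd p \<bullet> f) \<partial>\<gamma>)) \<longleftrightarrow>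
      (\<forall>f g. Q f \<bullet> g = (\<integral>p. (fst p \<bullet> f) * (snd p \<bullet> g) \<partial>\<gamma>))"
  proof -
    have e: "Q f \<bullet> g = P g \<bullet> f" for f g using F(4)[of g f] by (simp only: inner_commute)
    show ?thesis unfolding e by blast
  qed
  show ?thesis unfolding Let_def using 12 24 35 45 by blast
qed

end

locale L1 = L +
  assumes c1: "\<forall>f\<in>W. f = (\<integral>p. (snd p \<bullet> f) *\<^sub>R fst p \<partial>\<gamma>)"
begin

lemma c2: "P f = T f"
proof -
  have "P f \<in> W" by (rule ds_facts(1)[OF sW sV ds])
  then have "P f = T (P f)" by (rule bspec[OF c1])
  then show ?thesis using T_P[of f] by (rule trans[OF _ sym])
qed

lemma c3: "Q f = S f"
proof -
  have "Q f \<bullet> g = S f \<bullet> g" for g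
  proof -
    have "Q f \<bullet> g = g \<bullet> Q f" by (rule inner_commute)
    also have "\<dots> = P g \<bullet> f" by (rule ds_facts(4)[OF sW sV ds])
    also have "\<dots> = T g \<bullet> f" by (simp only: c2)
    also have "\<dots> = S f \<bullet> g" by (simp only: T_inner S_inner)
    finally show ?thesis .
  qed
  then show ?thesis using vector_eq_rdot[of "Q f" "S f"] by blast
qed

lemma key: "x \<in> W \<or> x \<in> V \<Longrightarrow> (norm x)\<^sup>2 = (\<integral>p. (fst p \<bullet> x) * (snd p \<bullet> x) \<partial>\<gamma>)"
proof -
  assume h: "x \<in> W \<or> x \<in> V"
  have n: "(norm x)\<^sup>2 = x \<bullet> x" by (rule power2_norm_eq_inner)
  show ?thesis
  proof (cases "x \<in> W")
    case True
    have "T x = x" using c2[of x] ds_facts(3)[OF sW sV ds True] by (rule trans[OF sym])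
    then have "x \<bullet> x = T x \<bullet> x" by (rule arg_cong[OF sym])
    then show ?thesis using n T_inner[of x x] by (rule_tac trans[OF n]) (rule trans)
  next
    case False
    then have "x \<in> V" using h by blast
    have "S x = x" using c3[of x] ds_facts(5)[OF sW sV ds \<open>x \<in> V\<close>] by (rule trans[OF sym])
    then have "x \<bullet> x = S x \<bullet> x" by (rule arg_cong[OF sym])
    then show ?thesis using S_inner[of x x] by (rule_tac trans[OF n]) (rule trans)
  qed
qed

lemma mu_int: "(\<integral>y. \<bar>x \<bullet> y\<bar>\<^sup>2 \<partial>\<mu>) = (\<integral>p. (fst p \<bullet> x)\<^sup>2 \<partial>\<gamma>)"
  unfolding mu_eq by (subst integral_distr[OF fst_meas]) (auto simp: inner_commute)

lemma nu_int: "(\<integral>y. \<bar>x \<bullet> y\<bar>\<^sup>2 \<partial>\<nu>) = (\<integral>p. (snd p \<bullet> x)\<^sup>2 \<partial>\<gamma>)"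
  unfolding nu_eq by (subst integral_distr[OF snd_meas]) (auto simp: inner_commute)

lemma low_mu: "x \<in> W \<or> x \<in> V \<Longrightarrow> 1 / B\<nu> * (norm x)\<^sup>2 \<le> (\<integral>y. \<bar>x \<bullet> y\<bar>\<^sup>2 \<partial>\<mu>)"
  unfolding mu_int
  apply (rule lowbd[OF int_fstsq int_sndsq int_prod key _ Bnu], assumption)
  using bessel_all[OF bnu sV, of x] Bnu key nu_int by simp

lemma low_nu: "x \<in> V \<Longrightarrow> 1 / B\<mu> * (norm x)\<^sup>2 \<le> (\<integral>y. \<bar>x \<bullet> y\<bar>\<^sup>2 \<partial>\<nu>)"
proof -
  assume x: "x \<in> V"
  have k: "(norm x)\<^sup>2 = (\<integral>p. (snd p \<bullet> x) * (fst p \<bullet> x) \<partial>\<gamma>)"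
    using key[of x] x by (simp add: mult.commute)
  have i: "integrable \<gamma> (\<lambda>p. (snd p \<bullet> x) * (fst p \<bullet> x))"
    using int_prod[of x x] by (simp add: mult.commute)
  show ?thesis unfolding nu_int
    apply (rule lowbd[OF int_sndsq int_fstsq i k _ Bmu])
    using bessel_all[OF bmu sW, of x] Bmu k mu_int by simp
qed

end


lemma P_meas: "subspace U \<Longrightarrow> orth_proj (U :: (real^'n) set) \<in> borel_measurable borel"
  by (intro borel_measurable_continuous_onI linear_continuous_on)
     (simp add: linear_conv_bounded_linear[symmetric] orth_proj_props(3))

lemma outer_meas: "(\<lambda>p. outer (fst p) (snd p)) \<in> borel_measurable (borel \<Otimes>\<^sub>M borel)"
  unfolding borel_prod outer_def
  by (intro borel_measurable_continuous_onI continuous_on_vec_lambda continuous_intros)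

lemma norm_outer: "norm (outer x y) = norm x * norm y"
proof -
  have r: "outer x y $ i = x $ i *\<^sub>R y" for i by (simp add: outer_def vec_eq_iff)
  have "norm (outer x y) = L2_set (\<lambda>i. norm (x $ i *\<^sub>R y)) UNIV"
    unfolding norm_vec_def[of "outer x y"] r by simp
  also have "\<dots> = L2_set (\<lambda>i. norm (x $ i) * norm y) UNIV" by simp
  also have "\<dots> = norm x * norm y"
    unfolding norm_vec_def[of x] by (rule L2_set_left_distrib[symmetric]) simp
  finally show ?thesis .
qed

lemma space_P2: "P2 Z m \<Longrightarrow> space m = UNIV"
  unfolding P2_def prob_on_def using sets_eq_imp_space_eq[of m borel] by simp

lemma push:
  fixes m :: "(real^'n) measure"
  assumes U: "subspace U" and m: "P2 Z m"
  shows "P2 U (distr m borel (orth_proj U)) \<and> (\<forall>h :: _ \<Rightarrow> real. h \<in> borel_measurable borel \<longrightarrow>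
     integral\<^sup>L (distr m borel (orth_proj U)) h = (\<integral>x. h (orth_proj U x) \<partial>m))"
proof -
  have pm: "orth_proj U \<in> measurable m borel" by (rule P2_meas[OF m P_meas[OF U]])
  have ps: "prob_space m" using m by (simp add: P2_def prob_on_def)
  have I: "\<forall>h :: _ \<Rightarrow> real. h \<in> borel_measurable borel \<longrightarrow>
     integral\<^sup>L (distr m borel (orth_proj U)) h = (\<integral>x. h (orth_proj U x) \<partial>m)"
    using integral_distr[OF pm] by blast
  have "prob_on U (distr m borel (orth_proj U))"
    unfolding prob_on_def
  proof (intro conjI)
    show "prob_space (distr m borel (orth_proj U))" by (rule prob_space.prob_space_distr[OF ps pm])
    show "sets (distr m borel (orth_proj U)) = sets borel" by simp
    show "U \<in> sets (distr m borel (orth_proj U))" using closed_subspace[OF U] by simp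
    have "orth_proj U -` U \<inter> space m = space m" using orth_proj_props(1)[OF U] by auto
    then show "emeasure (distr m borel (orth_proj U)) U = 1"
      using closed_subspace[OF U] by (simp add: emeasure_distr[OF pm] prob_space.emeasure_space_1[OF ps])
  qed
  moreover have "integrable (distr m borel (orth_proj U)) (\<lambda>x. (norm x)\<^sup>2)"
  proof (subst integrable_distr_eq[OF pm])
    show "(\<lambda>x. (norm x)\<^sup>2) \<in> borel_measurable borel" by measurable
    show "integrable m (\<lambda>x. (norm (orth_proj U x))\<^sup>2)"
    proof (rule Bochner_Integration.integrable_bound)
      show "integrable m (\<lambda>x. (norm x)\<^sup>2)" using m by (simp add: P2_def)
      show "(\<lambda>x. (norm (orth_proj U x))\<^sup>2) \<in> borel_measurable m"
        using pm by measurable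
      show "AE x in m. norm ((norm (orth_proj U x))\<^sup>2) \<le> norm ((norm x)\<^sup>2)"
        using orth_proj_props(5)[OF U] by (auto intro!: power_mono)
    qed
  qed
  ultimately show ?thesis using I by (simp add: P2_def)
qed

lemma push1: "subspace U \<Longrightarrow> P2 Z m \<Longrightarrow> P2 U (distr m borel (orth_proj U))"
  using push by blast
lemma push2: "subspace U \<Longrightarrow> P2 Z m \<Longrightarrow> (h :: _ \<Rightarrow> real) \<in> borel_measurable borel \<Longrightarrow>
     integral\<^sup>L (distr m borel (orth_proj U)) h = (\<integral>x. h (orth_proj U x) \<partial>m)"
  using push[of U Z m] by blast

context L1 begin

lemma frame_mu: "prob_frame W \<mu> (1 / B\<nu>) (max B\<mu> (1 / B\<nu>))"
  unfolding prob_frame_def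
proof (intro conjI ballI)
  show "0 < 1 / B\<nu>" using Bnu by simp
  show "1 / B\<nu> \<le> max B\<mu> (1 / B\<nu>)" by simp
  show "bessel W \<mu> (max B\<mu> (1 / B\<nu>))" unfolding bessel_def
  proof (intro conjI ballI)
    show "P2 W \<mu>" by (rule P2mu)
    fix x assume "x \<in> W"
    then have "(\<integral>y. \<bar>x \<bullet> y\<bar>\<^sup>2 \<partial>\<mu>) \<le> B\<mu> * (norm x)\<^sup>2" using bmu by (simp add: bessel_def)
    also have "\<dots> \<le> max B\<mu> (1 / B\<nu>) * (norm x)\<^sup>2" by (intro mult_right_mono) auto
    finally show "(\<integral>y. \<bar>x \<bullet> y\<bar>\<^sup>2 \<partial>\<mu>) \<le> max B\<mu> (1 / B\<nu>) * (norm x)\<^sup>2" .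
  qed
  fix x assume "x \<in> W"
  then show "1 / B\<nu> * (norm x)\<^sup>2 \<le> (\<integral>y. \<bar>x \<bullet> y\<bar>\<^sup>2 \<partial>\<mu>)" using low_mu by blast
qed

lemma frame_nu: "prob_frame V \<nu> (1 / B\<mu>) (max B\<nu> (1 / B\<mu>))"
  unfolding prob_frame_def
proof (intro conjI ballI)
  show "0 < 1 / B\<mu>" using Bmu by simp
  show "1 / B\<mu> \<le> max B\<nu> (1 / B\<mu>)" by simp
  show "bessel V \<nu> (max B\<nu> (1 / B\<mu>))" unfolding bessel_def
  proof (intro conjI ballI)
    show "P2 V \<nu>" by (rule P2nu)
    fix x assume "x \<in> V"
    then have "(\<integral>y. \<bar>x \<bullet> y\<bar>\<^sup>2 \<partial>\<nu>) \<le> B\<nu> * (norm x)\<^sup>2" using bnu by (simp add: bessel_def)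
    also have "\<dots> \<le> max B\<nu> (1 / B\<mu>) * (norm x)\<^sup>2" by (intro mult_right_mono) auto
    finally show "(\<integral>y. \<bar>x \<bullet> y\<bar>\<^sup>2 \<partial>\<nu>) \<le> max B\<nu> (1 / B\<mu>) * (norm x)\<^sup>2" .
  qed
  fix x assume "x \<in> V"
  then show "1 / B\<mu> * (norm x)\<^sup>2 \<le> (\<integral>y. \<bar>x \<bullet> y\<bar>\<^sup>2 \<partial>\<nu>)" by (rule low_nu)
qed

lemma frame_mu2: "prob_frame V (distr \<mu> borel (orth_proj V)) (1 / B\<nu>) (max B\<mu> (1 / B\<nu>))"
  unfolding prob_frame_def
proof (intro conjI ballI)
  have ii: "(\<integral>y. \<bar>x \<bullet> y\<bar>\<^sup>2 \<partial>(distr \<mu> borel (orth_proj V))) = (\<integral>y. \<bar>x \<bullet> y\<bar>\<^sup>2 \<partial>\<mu>)"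
    if "x \<in> V" for x
    using push2[OF sV P2mu, of "\<lambda>y. \<bar>x \<bullet> y\<bar>\<^sup>2"] orth_proj_props(6)[OF sV that] by simp
  show "0 < 1 / B\<nu>" using Bnu by simp
  show "1 / B\<nu> \<le> max B\<mu> (1 / B\<nu>)" by simp
  show "bessel V (distr \<mu> borel (orth_proj V)) (max B\<mu> (1 / B\<nu>))" unfolding bessel_def
  proof (intro conjI ballI)
    show "P2 V (distr \<mu> borel (orth_proj V))" by (rule push1[OF sV P2mu])
    fix x assume x: "x \<in> V"
    have "(\<integral>y. \<bar>x \<bullet> y\<bar>\<^sup>2 \<partial>\<mu>) \<le> B\<mu> * (norm x)\<^sup>2" using bessel_all[OF bmu sW] Bmu by simp
    also have "\<dots> \<le> max B\<mu> (1 / B\<nu>) * (norm x)\<^sup>2" by (intro mult_right_mono) auto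
    finally show "(\<integral>y. \<bar>x \<bullet> y\<bar>\<^sup>2 \<partial>(distr \<mu> borel (orth_proj V))) \<le> max B\<mu> (1 / B\<nu>) * (norm x)\<^sup>2"
      using ii[OF x] by simp
  qed
  fix x assume "x \<in> V"
  then show "1 / B\<nu> * (norm x)\<^sup>2 \<le> (\<integral>y. \<bar>x \<bullet> y\<bar>\<^sup>2 \<partial>(distr \<mu> borel (orth_proj V)))"
    using low_mu ii by simp
qed

lemma vnth: "v $ i = v \<bullet> axis i 1" by (simp add: inner_axis)

lemma T_nth: "T v $ i = (\<integral>p. (snd p \<bullet> v) * fst p $ i \<partial>\<gamma>)"
  using integral_bounded_linear[OF bounded_linear_vec_nth intT[of v], of i] by simp

lemma S_nth: "S v $ i = (\<integral>p. (fst p \<bullet> v) * snd p $ i \<partial>\<gamma>)"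
  using integral_bounded_linear[OF bounded_linear_vec_nth intS[of v], of i] by simp

lemma mat_nth:
  fixes F :: "_ \<Rightarrow> real^'n^'n"
  assumes "integrable \<gamma> F"
  shows "(\<integral>p. F p \<partial>\<gamma>) $ i $ j = (\<integral>p. F p $ i $ j \<partial>\<gamma>)"
  using integral_bounded_linear[OF bounded_linear_compose[OF bounded_linear_vec_nth bounded_linear_vec_nth] assms,
      of i j] by simp

lemma dual1: "dual_prob_frames W \<mu> (distr \<nu> borel (orth_proj W))"
  unfolding dual_prob_frames_def
proof (intro conjI)
  show "\<exists>A B. prob_frame W \<mu> A B" using frame_mu by blast
  show "prob_on W (distr \<nu> borel (orth_proj W))" using push1[OF sW P2nu] by (simp add: P2_def)
  define g where "g = (\<lambda>p::(real^'a) \<times> (real^'a). (fst p, orth_proj W (snd p)))"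
  have gm: "g \<in> measurable (borel \<Otimes>\<^sub>M borel) (borel \<Otimes>\<^sub>M borel)"
    unfolding g_def using P_meas[OF sW] by measurable
  have gm': "g \<in> measurable \<gamma> (borel \<Otimes>\<^sub>M borel)" by (rule gmeas[OF gm])
  let ?g = "distr \<gamma> (borel \<Otimes>\<^sub>M borel) g"
  have "coupling ?g \<mu> (distr \<nu> borel (orth_proj W))"
    unfolding coupling_def
  proof (intro conjI)
    show "prob_space ?g" by (rule prob_space.prob_space_distr[OF ps_g gm'])
    show "sets ?g = sets (borel \<Otimes>\<^sub>M borel)" by simp
    have "distr ?g borel fst = distr \<gamma> borel (fst \<circ> g)"
      by (rule distr_distr[OF _ gm']) measurable
    also have "fst \<circ> g = fst" by (simp add: g_def fun_eq_iff)
    finally show "distr ?g borel fst = \<mu>" using mu_eq by simp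
    have "distr ?g borel snd = distr \<gamma> borel (snd \<circ> g)"
      by (rule distr_distr[OF _ gm']) measurable
    also have "snd \<circ> g = orth_proj W \<circ> snd" by (simp add: g_def fun_eq_iff)
    also have "distr \<gamma> borel (orth_proj W \<circ> snd) = distr (distr \<gamma> borel snd) borel (orth_proj W)"
      by (rule distr_distr[OF P_meas[OF sW] snd_meas, symmetric])
    finally show "distr ?g borel snd = distr \<nu> borel (orth_proj W)" using nu_eq by simp
  qed
  moreover have "(\<integral>p. outer (fst p) (snd p) \<partial>?g) = matrix (orth_proj W)"
  proof -
    have "(\<integral>p. outer (fst p) (snd p) \<partial>?g) = (\<integral>p. outer (fst (g p)) (snd (g p)) \<partial>\<gamma>)"
      by (rule integral_distr[OF gm' outer_meas])
    also have "\<dots> = (\<integral>p. outer (fst p) (orth_proj W (snd p)) \<partial>\<gamma>)" by (simp add: g_def)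
    also have "\<dots> = matrix (orth_proj W)"
    proof -
      have Fm: "(\<lambda>p. outer (fst p) (orth_proj W (snd p))) \<in> borel_measurable (borel \<Otimes>\<^sub>M borel)"
        using measurable_compose[OF gm outer_meas] by (simp add: g_def o_def)
      have iF: "integrable \<gamma> (\<lambda>p. outer (fst p) (orth_proj W (snd p)))"
      proof (rule int_bound[OF Fm, where c = 1])
        fix p
        have "norm (outer (fst p) (orth_proj W (snd p))) \<le> norm (fst p) * norm (snd p)"
          unfolding norm_outer by (intro mult_left_mono orth_proj_props(5)[OF sW]) auto
        also have "\<dots> \<le> 1 * ((norm (fst p))\<^sup>2 + (norm (snd p))\<^sup>2)" using ab_le by simp
        finally show "norm (outer (fst p) (orth_proj W (snd p))) \<le> 1 * ((norm (fst p))\<^sup>2 + (norm (snd p))\<^sup>2)" .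
      qed
      show ?thesis
      proof (simp only: vec_eq_iff, intro allI)
        fix i j
        have "(\<integral>p. outer (fst p) (orth_proj W (snd p)) \<partial>\<gamma>) $ i $ j
            = (\<integral>p. fst p $ i * orth_proj W (snd p) $ j \<partial>\<gamma>)"
          by (subst mat_nth[OF iF]) (simp add: outer_def)
        also have "\<dots> = (\<integral>p. (snd p \<bullet> orth_proj W (axis j 1)) * fst p $ i \<partial>\<gamma>)"
          by (simp add: vnth[of "orth_proj W _"] orth_proj_props(4)[OF sW] mult.commute)
        also have "\<dots> = T (orth_proj W (axis j 1)) $ i" by (simp add: T_nth)
        also have "T (orth_proj W (axis j 1)) = orth_proj W (axis j 1)"
          using c2[of "orth_proj W (axis j 1)"] ds_facts(3)[OF sW sV ds orth_proj_props(1)[OF sW]]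
          by simp
        finally show "(\<integral>p. outer (fst p) (orth_proj W (snd p)) \<partial>\<gamma>) $ i $ j = matrix (orth_proj W) $ i $ j"
          by (simp add: matrix_def)
      qed
    qed
    finally show ?thesis .
  qed
  ultimately show "\<exists>\<gamma>'. coupling \<gamma>' \<mu> (distr \<nu> borel (orth_proj W)) \<and>
      (\<integral>p. outer (fst p) (snd p) \<partial>\<gamma>') = matrix (orth_proj W)" by blast
qed

lemma dual2: "dual_prob_frames V (distr \<mu> borel (orth_proj V)) \<nu>"
  unfolding dual_prob_frames_def
proof (intro conjI)
  show "\<exists>A B. prob_frame V (distr \<mu> borel (orth_proj V)) A B" using frame_mu2 by blast
  show "prob_on V \<nu>" using P2nu by (simp add: P2_def)
  define g where "g = (\<lambda>p::(real^'a) \<times> (real^'a). (orth_proj V (fst p), snd p))"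
  have gm: "g \<in> measurable (borel \<Otimes>\<^sub>M borel) (borel \<Otimes>\<^sub>M borel)"
    unfolding g_def using P_meas[OF sV] by measurable
  have gm': "g \<in> measurable \<gamma> (borel \<Otimes>\<^sub>M borel)" by (rule gmeas[OF gm])
  let ?g = "distr \<gamma> (borel \<Otimes>\<^sub>M borel) g"
  have "coupling ?g (distr \<mu> borel (orth_proj V)) \<nu>"
    unfolding coupling_def
  proof (intro conjI)
    show "prob_space ?g" by (rule prob_space.prob_space_distr[OF ps_g gm'])
    show "sets ?g = sets (borel \<Otimes>\<^sub>M borel)" by simp
    have "distr ?g borel snd = distr \<gamma> borel (snd \<circ> g)"
      by (rule distr_distr[OF _ gm']) measurable
    also have "snd \<circ> g = snd" by (simp add: g_def fun_eq_iff)
    finally show "distr ?g borel snd = \<nu>" using nu_eq by simp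
    have "distr ?g borel fst = distr \<gamma> borel (fst \<circ> g)"
      by (rule distr_distr[OF _ gm']) measurable
    also have "fst \<circ> g = orth_proj V \<circ> fst" by (simp add: g_def fun_eq_iff)
    also have "distr \<gamma> borel (orth_proj V \<circ> fst) = distr (distr \<gamma> borel fst) borel (orth_proj V)"
      by (rule distr_distr[OF P_meas[OF sV] fst_meas, symmetric])
    finally show "distr ?g borel fst = distr \<mu> borel (orth_proj V)" using mu_eq by simp
  qed
  moreover have "(\<integral>p. outer (fst p) (snd p) \<partial>?g) = matrix (orth_proj V)"
  proof -
    have "(\<integral>p. outer (fst p) (snd p) \<partial>?g) = (\<integral>p. outer (fst (g p)) (snd (g p)) \<partial>\<gamma>)"
      by (rule integral_distr[OF gm' outer_meas])
    also have "\<dots> = (\<integral>p. outer (orth_proj V (fst p)) (snd p) \<partial>\<gamma>)" by (simp add: g_def)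
    also have "\<dots> = matrix (orth_proj V)"
    proof -
      have Fm: "(\<lambda>p. outer (orth_proj V (fst p)) (snd p)) \<in> borel_measurable (borel \<Otimes>\<^sub>M borel)"
        using measurable_compose[OF gm outer_meas] by (simp add: g_def o_def)
      have iF: "integrable \<gamma> (\<lambda>p. outer (orth_proj V (fst p)) (snd p))"
      proof (rule int_bound[OF Fm, where c = 1])
        fix p
        have "norm (outer (orth_proj V (fst p)) (snd p)) \<le> norm (fst p) * norm (snd p)"
          unfolding norm_outer by (intro mult_right_mono orth_proj_props(5)[OF sV]) auto
        also have "\<dots> \<le> 1 * ((norm (fst p))\<^sup>2 + (norm (snd p))\<^sup>2)" using ab_le by simp
        finally show "norm (outer (orth_proj V (fst p)) (snd p)) \<le> 1 * ((norm (fst p))\<^sup>2 + (norm (snd p))\<^sup>2)" .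
      qed
      show ?thesis
      proof (simp only: vec_eq_iff, intro allI)
        fix i j
        have "(\<integral>p. outer (orth_proj V (fst p)) (snd p) \<partial>\<gamma>) $ i $ j
            = (\<integral>p. orth_proj V (fst p) $ i * snd p $ j \<partial>\<gamma>)"
          by (subst mat_nth[OF iF]) (simp add: outer_def)
        also have "\<dots> = (\<integral>p. (fst p \<bullet> orth_proj V (axis i 1)) * snd p $ j \<partial>\<gamma>)"
          by (simp add: vnth[of "orth_proj V _"] orth_proj_props(4)[OF sV])
        also have "\<dots> = S (orth_proj V (axis i 1)) $ j" by (simp add: S_nth)
        also have "S (orth_proj V (axis i 1)) = orth_proj V (axis i 1)"
          using c3[of "orth_proj V (axis i 1)"] ds_facts(5)[OF sW sV ds orth_proj_props(1)[OF sV]]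
          by simp
        also have "orth_proj V (axis i 1) $ j = orth_proj V (axis j 1) $ i"
        proof -
          have "orth_proj V (axis i 1) $ j = orth_proj V (axis i 1) \<bullet> axis j 1" by (rule vnth)
          also have "\<dots> = axis i 1 \<bullet> orth_proj V (axis j 1)" by (rule orth_proj_props(4)[OF sV])
          also have "\<dots> = orth_proj V (axis j 1) \<bullet> axis i 1" by (rule inner_commute)
          also have "\<dots> = orth_proj V (axis j 1) $ i" by (rule vnth[symmetric])
          finally show ?thesis .
        qed
        finally show "(\<integral>p. outer (orth_proj V (fst p)) (snd p) \<partial>\<gamma>) $ i $ j = matrix (orth_proj V) $ i $ j"
          by (simp add: matrix_def)
      qed
    qed
    finally show ?thesis .
  qed
  ultimately show "\<exists>\<gamma>'. coupling \<gamma>' (distr \<mu> borel (orth_proj V)) \<nu> \<and>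
      (\<integral>p. outer (fst p) (snd p) \<partial>\<gamma>') = matrix (orth_proj V)" by blast
qed

end
theorem lemma4p1:
  fixes W V :: "(real^'n) set"
    and \<mu> \<nu> :: "(real^'n) measure"
    and \<gamma> :: "((real^'n) \<times> (real^'n)) measure"
    and B\<mu> B\<nu> :: real
  assumes "subspace W" and "subspace V"
    and "direct_sum_univ W (orthogonal_comp V)"
    and "B\<mu> > 0" and "B\<nu> > 0"
    and "bessel W \<mu> B\<mu>" and "bessel V \<nu> B\<nu>"
    and "coupling \<gamma> \<mu> \<nu>"
  shows
    "let c1 = (\<forall>f\<in>W. f = (\<integral>p. (snd p \<bullet> f) *\<^sub>R fst p \<partial>\<gamma>));
         c2 = (\<forall>f. oblique_proj W (orthogonal_comp V) f = (\<integral>p. (snd p \<bullet> f) *\<^sub>R fst p \<partial>\<gamma>));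
         c3 = (\<forall>f. oblique_proj V (orthogonal_comp W) f = (\<integral>p. (fst p \<bullet> f) *\<^sub>R snd p \<partial>\<gamma>));
         c4 = (\<forall>f g. oblique_proj W (orthogonal_comp V) f \<bullet> g =
                  (\<integral>p. (fst p \<bullet> g) * (snd p \<bullet> f) \<partial>\<gamma>));
         c5 = (\<forall>f g. oblique_proj V (orthogonal_comp W) f \<bullet> g =
                  (\<integral>p. (fst p \<bullet> f) * (snd p \<bullet> g) \<partial>\<gamma>))
     in (c1 \<longleftrightarrow> c2) \<and> (c2 \<longleftrightarrow> c3) \<and> (c3 \<longleftrightarrow> c4) \<and> (c4 \<longleftrightarrow> c5) \<and>
        (c1 \<longrightarrow>
           (\<exists>B. prob_frame W \<mu> (1 / B\<nu>) B) \<and> (\<exists>B. prob_frame V \<nu> (1 / B\<mu>) B) \<and>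
           dual_prob_frames W \<mu> (distr \<nu> borel (orth_proj W)) \<and>
           dual_prob_frames V (distr \<mu> borel (orth_proj V)) \<nu>)"
  proof -
  interpret L W V \<mu> \<nu> \<gamma> B\<mu> B\<nu>
    using assms by unfold_locales
  have E: "let c1 = (\<forall>f\<in>W. f = (\<integral>p. (snd p \<bullet> f) *\<^sub>R fst p \<partial>\<gamma>));
         c2 = (\<forall>f. oblique_proj W (orthogonal_comp V) f = (\<integral>p. (snd p \<bullet> f) *\<^sub>R fst p \<partial>\<gamma>));
         c3 = (\<forall>f. oblique_proj V (orthogonal_comp W) f = (\<integral>p. (fst p \<bullet> f) *\<^sub>R snd p \<partial>\<gamma>));
         c4 = (\<forall>f g. oblique_proj W (orthogonal_comp V) f \<bullet> g =
                  (\<integral>p. (fst p \<bullet> g) * (snd p \<bullet> f) \<partial>\<gamma>));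
         c5 = (\<forall>f g. oblique_proj V (orthogonal_comp W) f \<bullet> g =
                  (\<integral>p. (fst p \<bullet> f) * (snd p \<bullet> g) \<partial>\<gamma>))
     in (c1 \<longleftrightarrow> c2) \<and> (c2 \<longleftrightarrow> c3) \<and> (c3 \<longleftrightarrow> c4) \<and> (c4 \<longleftrightarrow> c5)"
    by (rule equivs)
  have C: "(\<forall>f\<in>W. f = (\<integral>p. (snd p \<bullet> f) *\<^sub>R fst p \<partial>\<gamma>)) \<longrightarrow>
           (\<exists>B. prob_frame W \<mu> (1 / B\<nu>) B) \<and> (\<exists>B. prob_frame V \<nu> (1 / B\<mu>) B) \<and>
           dual_prob_frames W \<mu> (distr \<nu> borel (orth_proj W)) \<and>
           dual_prob_frames V (distr \<mu> borel (orth_proj V)) \<nu>"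
  proof
    assume h: "\<forall>f\<in>W. f = (\<integral>p. (snd p \<bullet> f) *\<^sub>R fst p \<partial>\<gamma>)"
    interpret L1 W V \<mu> \<nu> \<gamma> B\<mu> B\<nu>
      using h by unfold_locales
    show "(\<exists>B. prob_frame W \<mu> (1 / B\<nu>) B) \<and> (\<exists>B. prob_frame V \<nu> (1 / B\<mu>) B) \<and>
           dual_prob_frames W \<mu> (distr \<nu> borel (orth_proj W)) \<and>
           dual_prob_frames V (distr \<mu> borel (orth_proj V)) \<nu>"
      using frame_mu frame_nu dual1 dual2 by blast
  qed
  show ?thesis using E C unfolding Let_def by blast
qed

end
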